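(* Fix a real number $\rho\ge 1$. For each positive integer $m$, let $L=2m+2\rho$ and consider the instance with one sensor at location $0$ with radius $\rho$ and $m$ sensors at locations $2k-1$ ($k=1,\dots,m$) with radius $1$. Let $A_m$ be the minimum cost of a feasible order-preserving solution and $O_m$ the minimum cost of a feasible solution of this instance. Then $A_m/O_m\to\rho$ as $m\to\infty$.
   Context: Barrier coverage problem: an instance consists of a barrier length $L>0$ and $n$ sensors; sensor $i$ has a location $x_i\in\mathbb{R}$ and a radius $r_i>0$. The sensors are indexed so that $x_1\le x_2\le\cdots\le x_n$. A solution is a vector $y\in\mathbb{R}^n$; sensor $i$ at $y_i$ covers $[y_i-r_i,y_i+r_i]$. The solution is feasible if $[0,L]\subseteq\bigcup_i [y_i-r_i,y_i+r_i]$; its cost is $\sum_i|y_i-x_i|$. A set $S$ is active for $y$ if $[0,L]\subseteq\bigcup_{i\in S}[y_i-r_i,y_i+r_i]$. A solution $y$ is order-preserving if it has an active set $S$ such that for all $i,j\in S$ with $i<j$ we have $y_i<y_j$. (In the instance, the ratio of largest to smallest radius is $\rho$.) *)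

theory Defs
  imports Complex_Main
begin

text \<open>Barrier coverage. Sensors are indexed 0..n-1 (i < n); x i location, r i radius,
  y i new position. Only the values of y on i < n matter.\<close>

definition active :: "(nat \<Rightarrow> real) \<Rightarrow> real \<Rightarrow> (nat \<Rightarrow> real) \<Rightarrow> nat set \<Rightarrow> bool" where
  "active r L y S \<longleftrightarrow> {0..L} \<subseteq> (\<Union>i\<in>S. {y i - r i .. y i + r i})"

definition feasible :: "nat \<Rightarrow> (nat \<Rightarrow> real) \<Rightarrow> real \<Rightarrow> (nat \<Rightarrow> real) \<Rightarrow> bool" where
  "feasible n r L y \<longleftrightarrow> active r L y {..<n}"

definition order_preserving :: "nat \<Rightarrow> (nat \<Rightarrow> real) \<Rightarrow> real \<Rightarrow> (nat \<Rightarrow> real) \<Rightarrow> bool" where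
  "order_preserving n r L y \<longleftrightarrow>
     (\<exists>S \<subseteq> {..<n}. active r L y S \<and> (\<forall>i\<in>S. \<forall>j\<in>S. i < j \<longrightarrow> y i < y j))"

definition cost :: "nat \<Rightarrow> (nat \<Rightarrow> real) \<Rightarrow> (nat \<Rightarrow> real) \<Rightarrow> real" where
  "cost n x y = (\<Sum>i<n. \<bar>y i - x i\<bar>)"

definition opt_cost :: "nat \<Rightarrow> (nat \<Rightarrow> real) \<Rightarrow> (nat \<Rightarrow> real) \<Rightarrow> real \<Rightarrow> real" where
  "opt_cost n x r L = Inf (cost n x ` {y. feasible n r L y})"

definition op_opt_cost :: "nat \<Rightarrow> (nat \<Rightarrow> real) \<Rightarrow> (nat \<Rightarrow> real) \<Rightarrow> real \<Rightarrow> real" where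
  "op_opt_cost n x r L = Inf (cost n x ` {y. feasible n r L y \<and> order_preserving n r L y})"

definition inst_x :: "nat \<Rightarrow> real" where
  "inst_x i = (if i = 0 then 0 else 2 * real i - 1)"

definition inst_r :: "real \<Rightarrow> nat \<Rightarrow> real" where
  "inst_r \<rho> i = (if i = 0 then \<rho> else 1)"

end

theory Submission
  imports Defs "HOL-Analysis.Analysis" "HOL-Real_Asymp.Real_Asymp"
begin

lemma cover_mu:
  fixes \<mu> :: "real \<Rightarrow> real" and a b :: "nat \<Rightarrow> real"
  assumes mono: "mono \<mu>"
  shows "finite S \<Longrightarrow> (\<And>i. i\<in>S \<Longrightarrow> a i \<le> b i) \<Longrightarrow> u \<le> v \<Longrightarrow>
    {u..v} \<subseteq> (\<Union>i\<in>S. {a i..b i}) \<Longrightarrow> \<mu> v - \<mu> u \<le> (\<Sum>i\<in>S. \<mu> (b i) - \<mu> (a i))"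
proof (induction "card S" arbitrary: S v rule: less_induct)
  case less
  have "v \<in> {u..v}" using less.prems(3) by simp
  then have "v \<in> (\<Union>i\<in>S. {a i..b i})" using less.prems(4) by blast
  then obtain i where i: "i\<in>S" "a i \<le> v" "v \<le> b i" by auto
  have nn: "\<And>j. j\<in>S \<Longrightarrow> 0 \<le> \<mu> (b j) - \<mu> (a j)"
    using mono less.prems(2) by (simp add: monoD)
  have split: "(\<Sum>j\<in>S. \<mu> (b j) - \<mu> (a j)) = (\<mu> (b i) - \<mu> (a i)) + (\<Sum>j\<in>S-{i}. \<mu> (b j) - \<mu> (a j))"
    using less.prems(1) i(1) by (rule sum.remove)
  have rest: "0 \<le> (\<Sum>j\<in>S-{i}. \<mu> (b j) - \<mu> (a j))"
    using nn by (intro sum_nonneg) auto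
  show ?case
  proof (cases "a i \<le> u")
    case True
    have "\<mu> v \<le> \<mu> (b i)" "\<mu> (a i) \<le> \<mu> u" using mono True i by (auto simp: monoD)
    then show ?thesis using split rest by linarith
  next
    case False
    have sub: "{u..<a i} \<subseteq> (\<Union>j\<in>S-{i}. {a j..b j})"
    proof
      fix w assume w: "w \<in> {u..<a i}"
      then have "w \<in> {u..v}" using i by auto
      then obtain j where "j \<in> S" "w \<in> {a j..b j}" using less.prems(4) by blast
      moreover have "j \<noteq> i" using w calculation by auto
      ultimately show "w \<in> (\<Union>j\<in>S-{i}. {a j..b j})" by auto
    qed
    have cl: "closed (\<Union>j\<in>S-{i}. {a j..b j})"
      using less.prems(1) by (intro closed_UN) auto
    have "closure {u..<a i} \<subseteq> (\<Union>j\<in>S-{i}. {a j..b j})"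
      by (rule closure_minimal[OF sub cl])
    then have sub2: "{u..a i} \<subseteq> (\<Union>j\<in>S-{i}. {a j..b j})" using False by simp
    have "card (S-{i}) < card S" using less.prems(1) i(1) by (rule card_Diff1_less)
    then have IH: "\<mu> (a i) - \<mu> u \<le> (\<Sum>j\<in>S-{i}. \<mu> (b j) - \<mu> (a j))"
      using less.hyps[of "S-{i}" "a i"] less.prems sub2 False by auto
    have "\<mu> v \<le> \<mu> (b i)" using mono i by (auto simp: monoD)
    then show ?thesis using split IH by linarith
  qed
qed

lemma mu_bound:
  fixes y r :: real
  assumes "r > 0"
  shows "(max (y+r) 0)^2/2 - (max (y-r) 0)^2/2 \<le> 2*r*max y r"
proof (cases "y \<ge> r")
  case True
  then have "max (y+r) 0 = y+r" "max (y-r) 0 = y-r" "max y r = y" using assms by auto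
  moreover have "(y+r)^2/2 - (y-r)^2/2 = 2*r*y" by (simp add: power2_eq_square field_simps)
  ultimately show ?thesis by simp
next
  case False
  have "max (y+r) 0 \<le> 2*r" "0 \<le> max (y+r) 0" using False assms by auto
  then have "(max (y+r) 0)^2 \<le> (2*r)^2" by (intro power_mono) auto
  then show ?thesis using False assms by (simp add: power2_eq_square)
qed

lemma weighted:
  fixes r y :: "nat \<Rightarrow> real"
  assumes "finite S" "\<And>i. i\<in>S \<Longrightarrow> r i > 0" "0 \<le> L" "active r L y S"
  shows "L^2/2 \<le> (\<Sum>i\<in>S. 2 * r i * max (y i) (r i))"
proof -
  define \<mu> where "\<mu> = (\<lambda>t::real. (max t 0)^2/2)"
  have mono: "mono \<mu>" unfolding \<mu>_def mono_def
    by (auto intro!: power_mono divide_right_mono)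
  have "\<mu> L - \<mu> 0 \<le> (\<Sum>i\<in>S. \<mu> (y i + r i) - \<mu> (y i - r i))"
    using cover_mu[OF mono, of S "\<lambda>i. y i - r i" "\<lambda>i. y i + r i" 0 L] assms
    by (force simp: active_def)
  also have "\<dots> \<le> (\<Sum>i\<in>S. 2 * r i * max (y i) (r i))"
    using assms(2) by (intro sum_mono) (simp add: \<mu>_def mu_bound)
  finally show ?thesis using assms(3) by (simp add: \<mu>_def)
qed

lemma sum_odd: "(\<Sum>i<m. (2*real i + 1)) = (real m)^2"
  by (induction m) (auto simp: power2_eq_square algebra_simps)

lemma cost_split: "cost (Suc m) inst_x y = \<bar>y 0\<bar> + (\<Sum>i<m. \<bar>y (Suc i) - (2*real i + 1)\<bar>)"
  unfolding cost_def sum.lessThan_Suc_shift by (simp add: inst_x_def add.commute)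

lemma wsum_split: "(\<Sum>i<Suc m. 2 * inst_r \<rho> i * max (y i) (inst_r \<rho> i))
   = 2 * \<rho> * max (y 0) \<rho> + (\<Sum>i<m. 2 * max (y (Suc i)) 1)"
  unfolding sum.lessThan_Suc_shift by (simp add: inst_r_def)

lemma units_lower: "(\<Sum>i<m. max (y (Suc i)) 1) - (real m)^2 \<le> (\<Sum>i<m. \<bar>y (Suc i) - (2*real i + 1)\<bar>)"
proof -
  have "(\<Sum>i<m. max (y (Suc i)) 1) - (real m)^2 = (\<Sum>i<m. max (y (Suc i)) 1 - (2*real i + 1))"
    by (simp add: sum_subtractf sum_odd)
  also have "\<dots> \<le> (\<Sum>i<m. \<bar>y (Suc i) - (2*real i + 1)\<bar>)"
    by (intro sum_mono) auto
  finally show ?thesis .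
qed

lemma lower_feas:
  assumes "\<rho> \<ge> 1" "feasible (Suc m) (inst_r \<rho>) (2 * real m + 2 * \<rho>) y"
  shows "2 * real m \<le> cost (Suc m) inst_x y"
proof -
  have pos: "\<And>i. inst_r \<rho> i > 0" using assms(1) by (simp add: inst_r_def)
  have "(2 * real m + 2 * \<rho>)^2/2 \<le> (\<Sum>i<Suc m. 2 * inst_r \<rho> i * max (y i) (inst_r \<rho> i))"
    using assms by (intro weighted) (auto simp: feasible_def pos)
  then have w: "(2 * real m + 2 * \<rho>)^2/2 \<le> 2 * \<rho> * max (y 0) \<rho> + 2 * (\<Sum>i<m. max (y (Suc i)) 1)"
    using wsum_split[where \<rho>=\<rho> and m=m and y=y] by (simp add: sum_distrib_left)
  have u: "(\<Sum>i<m. max (y (Suc i)) 1) - (real m)^2 \<le> (\<Sum>i<m. \<bar>y (Suc i) - (2*real i + 1)\<bar>)"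
    by (rule units_lower)
  have nn: "0 \<le> (\<Sum>i<m. \<bar>y (Suc i) - (2*real i + 1)\<bar>)" by (intro sum_nonneg) auto
  show ?thesis
  proof (cases "y 0 \<ge> 2 * real m + \<rho>")
    case True
    then show ?thesis using nn assms(1) unfolding cost_split by linarith
  next
    case False
    define z where "z = max (y 0) \<rho>"
    define A where "A = (\<Sum>i<m. max (y (Suc i)) 1)"
    define B where "B = (\<Sum>i<m. \<bar>y (Suc i) - (2*real i + 1)\<bar>)"
    have z: "z \<le> 2 * real m + \<rho>" "z - \<rho> \<le> \<bar>y 0\<bar>" using False assms(1) by (auto simp: z_def max_def)
    have m1: "(\<rho> - 1) * z \<le> (\<rho> - 1) * (2 * real m + \<rho>)"
      using z(1) assms(1) by (intro mult_left_mono) auto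
    have sq: "(2 * real m + 2 * \<rho>)^2/2 = 2 * (real m)^2 + 4 * real m * \<rho> + 2 * \<rho>^2"
      by (simp add: power2_eq_square field_simps)
    have w': "2 * (real m)^2 + 4 * real m * \<rho> + 2 * \<rho>^2 \<le> 2 * \<rho> * z + 2 * A"
      using w sq unfolding z_def A_def by linarith
    have u': "A - (real m)^2 \<le> B" using u unfolding A_def B_def .
    have "(\<rho> - 1) * z = \<rho> * z - z" "(\<rho> - 1) * (2 * real m + \<rho>) = 2 * real m * \<rho> + \<rho> * \<rho> - 2 * real m - \<rho>"
      by (simp_all add: algebra_simps)
    then have "2 * real m \<le> \<bar>y 0\<bar> + B" using m1 w' u' z(2) by (simp add: power2_eq_square)
    then show ?thesis unfolding cost_split B_def .
  qed
qed

lemma lower_op: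
  assumes "\<rho> \<ge> 1" "order_preserving (Suc m) (inst_r \<rho>) (2 * real m + 2 * \<rho>) y"
  shows "2 * real m * \<rho> \<le> cost (Suc m) inst_x y"
proof -
  obtain S where S: "S \<subseteq> {..<Suc m}" "active (inst_r \<rho>) (2 * real m + 2 * \<rho>) y S"
    "\<forall>i\<in>S. \<forall>j\<in>S. i < j \<longrightarrow> y i < y j"
    using assms(2) unfolding order_preserving_def by blast
  have fin: "finite S" using S(1) finite_subset by blast
  have pos: "\<And>i. inst_r \<rho> i > 0" using assms(1) by (simp add: inst_r_def)
  define f where "f i = 2 * inst_r \<rho> i * max (y i) (inst_r \<rho> i)" for i
  define g where "g i = (if i = 0 then 2*\<rho>*\<rho> else f i)" for i
  have w: "(2 * real m + 2 * \<rho>)^2/2 \<le> (\<Sum>i\<in>S. f i)"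
    unfolding f_def using assms(1) S(2) fin pos by (intro weighted) auto
  have eqS: "f i = g i" if "i \<in> S" for i
  proof (cases "i = 0")
    case True
    have "(0::real) \<in> {0..2 * real m + 2 * \<rho>}" using assms(1) by simp
    then obtain j where j: "j \<in> S" "y j - inst_r \<rho> j \<le> 0"
      using S(2) unfolding active_def by force
    have "y 0 \<le> \<rho>"
    proof (cases "j = 0")
      case True then show ?thesis using j by (simp add: inst_r_def)
    next
      case False
      then have "y 0 < y j" using S(3) j(1) that True by auto
      moreover have "y j \<le> 1" using j False by (simp add: inst_r_def)
      ultimately show ?thesis using assms(1) by linarith
    qed
    then show ?thesis using True by (simp add: f_def g_def inst_r_def)
  next
    case False then show ?thesis by (simp add: g_def)
  qed
  have gnn: "0 \<le> g i" for i
    using pos[of i] assms(1) by (auto simp: g_def f_def intro!: mult_nonneg_nonneg)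
  have "(\<Sum>i\<in>S. f i) = (\<Sum>i\<in>S. g i)" using eqS by (rule sum.cong[OF refl])
  also have "\<dots> \<le> (\<Sum>i<Suc m. g i)" using S(1) gnn by (intro sum_mono2) auto
  also have "\<dots> = 2*\<rho>*\<rho> + (\<Sum>i<m. 2 * max (y (Suc i)) 1)"
    unfolding sum.lessThan_Suc_shift by (simp add: g_def f_def inst_r_def)
  also have "\<dots> = 2*\<rho>*\<rho> + 2 * (\<Sum>i<m. max (y (Suc i)) 1)"
    by (simp add: sum_distrib_left)
  finally have w2: "(2 * real m + 2 * \<rho>)^2/2 \<le> 2*\<rho>*\<rho> + 2 * (\<Sum>i<m. max (y (Suc i)) 1)"
    using w by linarith
  define A where "A = (\<Sum>i<m. max (y (Suc i)) 1)"
  define B where "B = (\<Sum>i<m. \<bar>y (Suc i) - (2*real i + 1)\<bar>)"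
  have u': "A - (real m)^2 \<le> B" using units_lower unfolding A_def B_def .
  have sq: "(2 * real m + 2 * \<rho>)^2/2 = 2 * (real m)^2 + 4 * real m * \<rho> + 2 * \<rho>*\<rho>"
    by (simp add: power2_eq_square field_simps)
  have "2 * real m * \<rho> \<le> \<bar>y 0\<bar> + B" using w2 sq u' unfolding A_def[symmetric]
    using abs_ge_zero[of "y 0"] by (simp add: algebra_simps)
  then show ?thesis unfolding cost_split B_def .
qed

lemma unit_cover:
  assumes "0 \<le> t" "t \<le> 2*real m" "m \<ge> 1"
  shows "\<exists>k. 1 \<le> k \<and> k \<le> m \<and> 2*real k - 2 \<le> t \<and> t \<le> 2*real k"
proof (cases "t = 2 * real m")
  case True then show ?thesis using assms by (intro exI[of _ m]) auto
next
  case False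
  define k where "k = nat \<lfloor>t/2\<rfloor> + 1"
  have f0: "0 \<le> \<lfloor>t/2\<rfloor>" using assms by simp
  have fl: "real_of_int \<lfloor>t/2\<rfloor> \<le> t/2" "t/2 < real_of_int \<lfloor>t/2\<rfloor> + 1" by linarith+
  have rk: "real k = real_of_int \<lfloor>t/2\<rfloor> + 1" using f0 by (simp add: k_def)
  have "\<lfloor>t/2\<rfloor> < int m" using assms False by linarith
  then have "nat \<lfloor>t/2\<rfloor> < m" using f0 by (simp add: nat_less_iff)
  then have "k \<le> m" "1 \<le> k" by (auto simp: k_def)
  moreover have "2*real k - 2 \<le> t" "t \<le> 2*real k" using fl rk by linarith+
  ultimately show ?thesis by blast
qed

definition w1 :: "nat \<Rightarrow> real \<Rightarrow> nat \<Rightarrow> real" where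
  "w1 m \<rho> i = (if i = 0 then 2*real m + \<rho> else inst_x i)"

definition w2 :: "real \<Rightarrow> nat \<Rightarrow> real" where
  "w2 \<rho> i = (if i = 0 then \<rho> else inst_x i + 2*\<rho>)"

lemma w1_feas:
  assumes "\<rho> \<ge> 1" "m \<ge> 1"
  shows "feasible (Suc m) (inst_r \<rho>) (2 * real m + 2 * \<rho>) (w1 m \<rho>)"
  unfolding feasible_def active_def
proof
  fix t assume t: "t \<in> {0..2 * real m + 2 * \<rho>}"
  show "t \<in> (\<Union>i\<in>{..<Suc m}. {w1 m \<rho> i - inst_r \<rho> i..w1 m \<rho> i + inst_r \<rho> i})"
  proof (cases "t \<ge> 2 * real m")
    case True
    then show ?thesis using t by (intro UN_I[of 0]) (auto simp: w1_def inst_r_def)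
  next
    case False
    then obtain k where k: "1 \<le> k" "k \<le> m" "2*real k - 2 \<le> t" "t \<le> 2*real k"
      using unit_cover[of t m] t assms by auto
    then show ?thesis by (intro UN_I[of k]) (auto simp: w1_def inst_r_def inst_x_def)
  qed
qed

lemma w1_cost: "cost (Suc m) inst_x (w1 m \<rho>) = \<bar>2*real m + \<rho>\<bar>"
  unfolding cost_split by (simp add: w1_def inst_x_def)

lemma w2_feas:
  assumes "\<rho> \<ge> 1" "m \<ge> 1"
  shows "feasible (Suc m) (inst_r \<rho>) (2 * real m + 2 * \<rho>) (w2 \<rho>)"
  unfolding feasible_def active_def
proof
  fix t assume t: "t \<in> {0..2 * real m + 2 * \<rho>}"
  show "t \<in> (\<Union>i\<in>{..<Suc m}. {w2 \<rho> i - inst_r \<rho> i..w2 \<rho> i + inst_r \<rho> i})"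
  proof (cases "t \<le> 2 * \<rho>")
    case True
    then show ?thesis using t by (intro UN_I[of 0]) (auto simp: w2_def inst_r_def)
  next
    case False
    then obtain k where k: "1 \<le> k" "k \<le> m" "2*real k - 2 \<le> t - 2*\<rho>" "t - 2*\<rho> \<le> 2*real k"
      using unit_cover[of "t - 2*\<rho>" m] t assms by auto
    then show ?thesis by (intro UN_I[of k]) (auto simp: w2_def inst_r_def inst_x_def)
  qed
qed

lemma w2_op:
  assumes "\<rho> \<ge> 1" "m \<ge> 1"
  shows "order_preserving (Suc m) (inst_r \<rho>) (2 * real m + 2 * \<rho>) (w2 \<rho>)"
  unfolding order_preserving_def
proof (intro exI[of _ "{..<Suc m}"] conjI)
  show "active (inst_r \<rho>) (2 * real m + 2 * \<rho>) (w2 \<rho>) {..<Suc m}"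
    using w2_feas[OF assms] by (simp add: feasible_def)
  show "\<forall>i\<in>{..<Suc m}. \<forall>j\<in>{..<Suc m}. i < j \<longrightarrow> w2 \<rho> i < w2 \<rho> j"
    using assms(1) by (auto simp: w2_def inst_x_def)
qed auto

lemma w2_cost: "cost (Suc m) inst_x (w2 \<rho>) = \<bar>\<rho>\<bar> + real m * \<bar>2*\<rho>\<bar>"
  unfolding cost_split by (simp add: w2_def inst_x_def)


lemma bounds:
  assumes "\<rho> \<ge> 1" "m \<ge> 1"
  shows "2 * real m \<le> opt_cost (m + 1) inst_x (inst_r \<rho>) (2 * real m + 2 * \<rho>)"
    "opt_cost (m + 1) inst_x (inst_r \<rho>) (2 * real m + 2 * \<rho>) \<le> 2 * real m + \<rho>"
    "2 * real m * \<rho> \<le> op_opt_cost (m + 1) inst_x (inst_r \<rho>) (2 * real m + 2 * \<rho>)"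
    "op_opt_cost (m + 1) inst_x (inst_r \<rho>) (2 * real m + 2 * \<rho>) \<le> \<rho> + real m * (2 * \<rho>)"
proof -
  let ?L = "2 * real m + 2 * \<rho>"
  let ?F = "{y. feasible (Suc m) (inst_r \<rho>) ?L y}"
  let ?G = "{y. feasible (Suc m) (inst_r \<rho>) ?L y \<and> order_preserving (Suc m) (inst_r \<rho>) ?L y}"
  have w1F: "w1 m \<rho> \<in> ?F" using w1_feas[OF assms] by simp
  have w2G: "w2 \<rho> \<in> ?G" using w2_feas[OF assms] w2_op[OF assms] by simp
  have lbF: "\<And>c. c \<in> cost (Suc m) inst_x ` ?F \<Longrightarrow> 2 * real m \<le> c"
    using lower_feas[OF assms(1)] by blast
  have lbG: "\<And>c. c \<in> cost (Suc m) inst_x ` ?G \<Longrightarrow> 2 * real m * \<rho> \<le> c"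
    using lower_op[OF assms(1)] by blast
  have bF: "bdd_below (cost (Suc m) inst_x ` ?F)" using lbF by (rule bdd_belowI)
  have bG: "bdd_below (cost (Suc m) inst_x ` ?G)" using lbG by (rule bdd_belowI)
  show "2 * real m \<le> opt_cost (m + 1) inst_x (inst_r \<rho>) ?L"
    unfolding opt_cost_def Suc_eq_plus1[symmetric] using w1F lbF by (intro cInf_greatest) auto
  have "opt_cost (m + 1) inst_x (inst_r \<rho>) ?L \<le> cost (Suc m) inst_x (w1 m \<rho>)"
    unfolding opt_cost_def Suc_eq_plus1[symmetric] using w1F bF by (intro cInf_lower) auto
  then show "opt_cost (m + 1) inst_x (inst_r \<rho>) ?L \<le> 2 * real m + \<rho>"
    using assms by (simp add: w1_cost)
  show "2 * real m * \<rho> \<le> op_opt_cost (m + 1) inst_x (inst_r \<rho>) ?L"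
    unfolding op_opt_cost_def Suc_eq_plus1[symmetric] using w2G lbG by (intro cInf_greatest) auto
  have "op_opt_cost (m + 1) inst_x (inst_r \<rho>) ?L \<le> cost (Suc m) inst_x (w2 \<rho>)"
    unfolding op_opt_cost_def Suc_eq_plus1[symmetric] using w2G bG by (intro cInf_lower) auto
  then show "op_opt_cost (m + 1) inst_x (inst_r \<rho>) ?L \<le> \<rho> + real m * (2 * \<rho>)"
    using assms by (simp add: w2_cost)
qed

lemma lim1: "(\<lambda>m. 2 * real m * \<rho> / (2 * real m + \<rho>)) \<longlonglongrightarrow> \<rho>"
  by real_asymp

lemma lim2: "(\<lambda>m. (\<rho> + real m * (2 * \<rho>)) / (2 * real m)) \<longlonglongrightarrow> \<rho>"
  by real_asymp


theorem lemma5: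
  fixes \<rho> :: real
  assumes "\<rho> \<ge> 1"
  shows "(\<lambda>m. op_opt_cost (m + 1) inst_x (inst_r \<rho>) (2 * real m + 2 * \<rho>)
             / opt_cost (m + 1) inst_x (inst_r \<rho>) (2 * real m + 2 * \<rho>))
         \<longlonglongrightarrow> \<rho>"
proof (rule tendsto_sandwich[OF _ _ lim1 lim2])
  show "\<forall>\<^sub>F m in sequentially. 2 * real m * \<rho> / (2 * real m + \<rho>) \<le>
      op_opt_cost (m + 1) inst_x (inst_r \<rho>) (2 * real m + 2 * \<rho>)
             / opt_cost (m + 1) inst_x (inst_r \<rho>) (2 * real m + 2 * \<rho>)"
    using eventually_ge_at_top[of 1]
  proof eventually_elim
    case (elim m)
    note b = bounds[OF assms elim]
    have "0 \<le> 2 * real m * \<rho>" using assms by simp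
    then show ?case using b assms elim by (intro frac_le; simp; linarith)
  qed
  show "\<forall>\<^sub>F m in sequentially. 
      op_opt_cost (m + 1) inst_x (inst_r \<rho>) (2 * real m + 2 * \<rho>)
             / opt_cost (m + 1) inst_x (inst_r \<rho>) (2 * real m + 2 * \<rho>)
      \<le> (\<rho> + real m * (2 * \<rho>)) / (2 * real m)"
    using eventually_ge_at_top[of 1]
  proof eventually_elim
    case (elim m)
    note b = bounds[OF assms elim]
    have "0 \<le> 2 * real m * \<rho>" using assms by simp
    then show ?case using b assms elim by (intro frac_le; simp; linarith)
  qed
qed

end
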